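(* Let $\mathcal F$ be a Hilbert space with metric $d$ induced by its norm, $\mathcal D=(\phi_i)_{i\in\mathbb N}\subset\mathcal F$, and $\pi:\mathbb N\to\mathbb N$ of at most polynomial growth. For every finite $I\subset\mathbb N$ let $(\tilde\phi^I_i)_{i\in I}$ be an orthonormalization of $(\phi_i)_{i\in I}$ (e.g. Gram–Schmidt: pairwise orthogonal vectors, each of norm $0$ or $1$, spanning the same space as $(\phi_i)_{i\in I}$). For $M\in\mathbb N$ and $c>0$ set $$\Sigma^\pi_M=\Big\{\sum_{i\in I}c_i\phi_i:I\subset\{1,\dots,\pi(M)\},|I|\le M,(c_i)\in\mathbb R^I\Big\},\quad \tilde\Sigma^{\pi,c}_M=\Big\{\sum_{i\in I}\tilde c_i\tilde\phi^I_i:I\subset\{1,\dots,\pi(M)\},|I|\le M,(\tilde c_i)\in[-c,c]^I\Big\}.$$ Then for every $c>0$ the sequence $\tilde\Sigma^{\pi,c}=(\tilde\Sigma^{\pi,c}_M)_M$ is $\infty$-encodable in $(\mathcal F,d)$, and for every bounded non-empty $\mathcal C\subset\mathcal F$, $$\gamma^*(\mathcal C|\Sigma^\pi)=\max_{c>0}\gamma^*(\mathcal C|\tilde\Sigma^{\pi,c})$$ (in particular the maximum is attained).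
   Context: Approximation speed: $\gamma^*(\mathcal C|\Sigma)=\sup\{\gamma\in\mathbb R:\sup_{f\in\mathcal C}\inf_{\Phi\in\Sigma_M}d(f,\Phi)=O(M^{-\gamma})\text{ as }M\to\infty\}\in[-\infty,\infty]$ ($\sup\emptyset=-\infty$). A finite $X\subset A$ is an $\varepsilon$-covering of $A$ if every point of $A$ is within distance $\varepsilon$ of some point of $X$. For $\gamma,h>0$, a $(\gamma,h)$-encoding of $\Sigma=(\Sigma_M)_M$ is a sequence $(\Sigma(\gamma,h)_M)_M$ such that for some $c_1,c_2>0$ and all $M$, $\Sigma(\gamma,h)_M$ is a $c_1M^{-\gamma}$-covering of $\Sigma_M$ with $\log_2|\Sigma(\gamma,h)_M|\le c_2M^{1+h}$. $\Sigma$ is $\gamma$-encodable if it admits a $(\gamma,h)$-encoding for every $h>0$, and $\infty$-encodable if it is $\gamma$-encodable for every $\gamma>0$. *)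

theory Defs
  imports "HOL-Analysis.Analysis" "HOL-Library.Landau_Symbols"
begin

text \<open>Approximation speed: sup of all real gamma such that
  sup over f in C of inf over Phi in Sigma M of d(f,Phi) is O(M powr -gamma) as M tends to infinity.
  The big-O condition is written out: eventually, for all f in C, the distance is bounded
  by K * M powr -gamma (distances are nonnegative, and a sup is bounded iff all elements are).\<close>
definition approx_speed :: "'a::metric_space set \<Rightarrow> (nat \<Rightarrow> 'a set) \<Rightarrow> ereal" where
  "approx_speed C \<Sigma> = Sup {ereal \<gamma> | \<gamma>. \<exists>K. \<forall>\<^sub>F M in sequentially.
       \<forall>f\<in>C. infdist f (\<Sigma> M) \<le> K * real M powr (- \<gamma>)}"

definition is_covering :: "'a::metric_space set \<Rightarrow> 'a set \<Rightarrow> real \<Rightarrow> bool" where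
  "is_covering X A \<epsilon> \<longleftrightarrow> finite X \<and> X \<subseteq> A \<and> (\<forall>a\<in>A. \<exists>x\<in>X. dist a x \<le> \<epsilon>)"

definition is_encoding :: "real \<Rightarrow> real \<Rightarrow> (nat \<Rightarrow> 'a::metric_space set) \<Rightarrow> (nat \<Rightarrow> 'a set) \<Rightarrow> bool" where
  "is_encoding \<gamma> h \<Sigma> E \<longleftrightarrow> (\<exists>c1 c2. c1 > 0 \<and> c2 > 0 \<and> (\<forall>M\<ge>1.
      is_covering (E M) (\<Sigma> M) (c1 * real M powr (- \<gamma>)) \<and>
      log 2 (real (card (E M))) \<le> c2 * real M powr (1 + h)))"

definition gamma_encodable :: "real \<Rightarrow> (nat \<Rightarrow> 'a::metric_space set) \<Rightarrow> bool" where
  "gamma_encodable \<gamma> \<Sigma> \<longleftrightarrow> (\<forall>h>0. \<exists>E. is_encoding \<gamma> h \<Sigma> E)"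

definition inf_encodable :: "(nat \<Rightarrow> 'a::metric_space set) \<Rightarrow> bool" where
  "inf_encodable \<Sigma> \<longleftrightarrow> (\<forall>\<gamma>>0. gamma_encodable \<gamma> \<Sigma>)"

definition Sigma_pi :: "(nat \<Rightarrow> 'a::real_vector) \<Rightarrow> (nat \<Rightarrow> nat) \<Rightarrow> nat \<Rightarrow> 'a set" where
  "Sigma_pi \<phi> \<pi> M = {(\<Sum>i\<in>I. c i *\<^sub>R \<phi> i) | I c. I \<subseteq> {1..\<pi> M} \<and> card I \<le> M}"

definition Sigma_tilde :: "(nat set \<Rightarrow> nat \<Rightarrow> 'a::real_vector) \<Rightarrow> (nat \<Rightarrow> nat) \<Rightarrow> real \<Rightarrow> nat \<Rightarrow> 'a set" where
  "Sigma_tilde \<psi> \<pi> c M = {(\<Sum>i\<in>I. d i *\<^sub>R \<psi> I i) | I d. I \<subseteq> {1..\<pi> M} \<and> card I \<le> M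
       \<and> (\<forall>i\<in>I. d i \<in> {-c..c})}"

definition is_orthonormalization :: "(nat \<Rightarrow> 'a::real_inner) \<Rightarrow> (nat set \<Rightarrow> nat \<Rightarrow> 'a) \<Rightarrow> bool" where
  "is_orthonormalization \<phi> \<psi> \<longleftrightarrow> (\<forall>I. finite I \<longrightarrow>
      (\<forall>i\<in>I. \<forall>j\<in>I. i \<noteq> j \<longrightarrow> inner (\<psi> I i) (\<psi> I j) = 0) \<and>
      (\<forall>i\<in>I. norm (\<psi> I i) = 0 \<or> norm (\<psi> I i) = 1) \<and>
      span (\<psi> I ` I) = span (\<phi> ` I))"

end

theory Submission
  imports Defs
begin

lemma span_image_repr:
  fixes \<phi> :: "nat \<Rightarrow> 'a::real_vector"
  assumes fin: "finite I" and x: "x \<in> span (\<phi> ` I)"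
  shows "\<exists>c. x = (\<Sum>i\<in>I. c i *\<^sub>R \<phi> i)"
proof -
  let ?T = "{(\<Sum>i\<in>I. c i *\<^sub>R \<phi> i) | c. True}"
  have "subspace ?T"
    unfolding subspace_def
  proof (intro conjI ballI allI)
    show "0 \<in> ?T" by (rule CollectI, rule exI[of _ "\<lambda>_. 0"]) simp
  next
    fix x y assume "x \<in> ?T" "y \<in> ?T"
    then obtain a b where "x = (\<Sum>i\<in>I. a i *\<^sub>R \<phi> i)" "y = (\<Sum>i\<in>I. b i *\<^sub>R \<phi> i)" by auto
    then show "x + y \<in> ?T"
      by (intro CollectI exI[of _ "\<lambda>i. a i + b i"]) (simp add: scaleR_add_left sum.distrib)
  next
    fix r :: real and x assume "x \<in> ?T"
    then obtain a where "x = (\<Sum>i\<in>I. a i *\<^sub>R \<phi> i)" by auto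
    then show "r *\<^sub>R x \<in> ?T"
      by (intro CollectI exI[of _ "\<lambda>i. r * a i"]) (simp add: scaleR_sum_right)
  qed
  moreover have "\<phi> ` I \<subseteq> ?T"
  proof
    fix v assume "v \<in> \<phi> ` I"
    then obtain j where j: "j \<in> I" "v = \<phi> j" by auto
    have "\<phi> j = (\<Sum>i\<in>I. (\<lambda>i. if i = j then 1 else 0) i *\<^sub>R \<phi> i)"
    proof -
      have "(\<Sum>i\<in>I. (\<lambda>i. if i = j then 1 else 0) i *\<^sub>R \<phi> i) = (\<Sum>i\<in>I. if i = j then \<phi> i else 0)"
        by (rule sum.cong) auto
      then show ?thesis using j fin by simp
    qed
    then show "v \<in> ?T" unfolding j(2) by (intro CollectI exI[of _ "\<lambda>i. if i = j then 1 else 0"]) simp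
  qed
  ultimately have "span (\<phi> ` I) \<subseteq> ?T" by (intro span_minimal)
  then show ?thesis using x by blast
qed

lemma tilde_subset:
  assumes orth: "is_orthonormalization \<phi> \<psi>"
  shows "Sigma_tilde \<psi> \<pi> c M \<subseteq> Sigma_pi \<phi> \<pi> M"
proof
  fix x assume "x \<in> Sigma_tilde \<psi> \<pi> c M"
  then obtain I d where x: "x = (\<Sum>i\<in>I. d i *\<^sub>R \<psi> I i)" and I: "I \<subseteq> {1..\<pi> M}" "card I \<le> M"
    unfolding Sigma_tilde_def by blast
  have fin: "finite I" using I(1) finite_subset by blast
  have "x \<in> span (\<psi> I ` I)" unfolding x by (intro span_sum span_scale span_base) auto
  also have "\<dots> = span (\<phi> ` I)" using orth fin unfolding is_orthonormalization_def by blast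
  finally obtain c where "x = (\<Sum>i\<in>I. c i *\<^sub>R \<phi> i)" using span_image_repr[OF fin] by blast
  then show "x \<in> Sigma_pi \<phi> \<pi> M" unfolding Sigma_pi_def using I by blast
qed

lemma proj_best:
  fixes \<phi> :: "nat \<Rightarrow> 'a::real_inner"
  assumes orth: "is_orthonormalization \<phi> \<psi>" and fin: "finite I"
    and g: "g \<in> span (\<phi> ` I)"
  shows "dist f (\<Sum>i\<in>I. (f \<bullet> \<psi> I i) *\<^sub>R \<psi> I i) \<le> dist f g"
proof -
  define p where "p = (\<Sum>i\<in>I. (f \<bullet> \<psi> I i) *\<^sub>R \<psi> I i)"
  have O: "\<And>i j. i\<in>I \<Longrightarrow> j\<in>I \<Longrightarrow> i\<noteq>j \<Longrightarrow> \<psi> I i \<bullet> \<psi> I j = 0"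
   and N: "\<And>i. i\<in>I \<Longrightarrow> norm (\<psi> I i) = 0 \<or> norm (\<psi> I i) = 1"
   and S: "span (\<psi> I ` I) = span (\<phi> ` I)"
    using orth fin unfolding is_orthonormalization_def by blast+
  have orthj: "(f - p) \<bullet> \<psi> I j = 0" if j: "j \<in> I" for j
  proof -
    have "p \<bullet> \<psi> I j = (\<Sum>i\<in>I. (f \<bullet> \<psi> I i) * (\<psi> I i \<bullet> \<psi> I j))"
      unfolding p_def by (simp add: inner_sum_left)
    also have "\<dots> = (\<Sum>i\<in>I. if i = j then (f \<bullet> \<psi> I j) * (\<psi> I j \<bullet> \<psi> I j) else 0)"
      by (rule sum.cong) (auto simp: O j)
    also have "\<dots> = (f \<bullet> \<psi> I j) * (\<psi> I j \<bullet> \<psi> I j)" using j fin by simp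
    also have "\<dots> = f \<bullet> \<psi> I j"
    proof (cases "norm (\<psi> I j) = 0")
      case True then show ?thesis by simp
    next
      case False then have "norm (\<psi> I j) = 1" using N j by blast
      then have "\<psi> I j \<bullet> \<psi> I j = 1" by (metis norm_eq_sqrt_inner real_sqrt_eq_1_iff)
      then show ?thesis by simp
    qed
    finally show ?thesis by (simp add: inner_diff_left)
  qed
  have pspan: "p \<in> span (\<psi> I ` I)" unfolding p_def by (intro span_sum span_scale span_base) auto
  have "p - g \<in> span (\<psi> I ` I)" using pspan g S by (simp add: span_diff)
  then have "orthogonal (f - p) (p - g)"
    by (rule orthogonal_to_span) (auto simp: orthogonal_def orthj)
  then have perp: "(f - p) \<bullet> (p - g) = 0" by (simp add: orthogonal_def)
  then have perp2: "(p - g) \<bullet> (f - p) = 0" by (simp add: inner_commute)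
  have e: "f - g = (f - p) + (p - g)" by simp
  have "(norm (f - g))^2 = (norm (f-p))^2 + (norm (p-g))^2"
    unfolding e by (simp only: power2_norm_eq_inner inner_add_left inner_add_right perp perp2)
  then have "(norm (f-p))^2 \<le> (norm (f-g))^2" by simp
  then have "norm (f-p) \<le> norm (f-g)" by (rule power2_le_imp_le) simp
  then show ?thesis by (simp add: dist_norm p_def)
qed

lemma round_grid:
  fixes c \<delta> x :: real and n :: nat
  assumes d: "\<delta> > 0" and n: "real n * \<delta> = 2*c" and x: "-c \<le> x" "x \<le> c"
  shows "\<exists>j\<le>n. \<bar>x - (-c + real j * \<delta>)\<bar> \<le> \<delta>"
proof -
  define t where "t = (x + c) / \<delta>"
  have t0: "0 \<le> t" using d x unfolding t_def by simp
  have tn: "t \<le> real n" using d x n unfolding t_def by (simp add: divide_le_eq)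
  define j where "j = nat \<lfloor>t\<rfloor>"
  have rj: "real j = of_int \<lfloor>t\<rfloor>" using t0 unfolding j_def by simp
  have j1: "real j \<le> t" using rj by linarith
  have j2: "t < real j + 1" using rj by linarith
  have "real j \<le> real n" using j1 tn by linarith
  then have jn: "j \<le> n" by simp
  have a: "real j * \<delta> \<le> x + c" using j1 d unfolding t_def by (simp add: le_divide_eq)
  have b: "x + c < (real j + 1) * \<delta>" using j2 d unfolding t_def by (simp add: divide_less_eq)
  have "\<bar>x - (-c + real j * \<delta>)\<bar> \<le> \<delta>" using a b by (simp add: algebra_simps abs_if)
  then show ?thesis using jn by blast
qed

lemma card_small_subsets:
  "card {I. I \<subseteq> {1..N::nat} \<and> card I \<le> M} \<le> (M+1) * (N+1)^M"
proof -
  have eq: "{I. I \<subseteq> {1..N} \<and> card I \<le> M} = (\<Union>k\<in>{..M}. {I. I \<subseteq> {1..N} \<and> card I = k})" by auto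
  have "card (\<Union>k\<in>{..M}. {I. I \<subseteq> {1..N} \<and> card I = k}) \<le> (\<Sum>k\<in>{..M}. card {I. I \<subseteq> {1..N} \<and> card I = k})"
    by (rule card_UN_le) simp
  also have "\<dots> = (\<Sum>k\<in>{..M}. N choose k)" by (simp add: n_subsets)
  also have "\<dots> \<le> (\<Sum>k\<in>{..M}. (N+1)^M)"
  proof (rule sum_mono)
    fix k assume k: "k \<in> {..M}"
    have "(N+1)^k \<le> (N+1)^M" using k by (intro power_increasing) auto
    moreover have "N choose k \<le> (N+1)^k"
    proof (cases "k \<le> N")
      case True
      then have "N choose k \<le> N^k" by (rule binomial_le_pow)
      also have "\<dots> \<le> (N+1)^k" by (intro power_mono) auto
      finally show ?thesis .
    next
      case False then show ?thesis by (simp add: binomial_eq_0)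
    qed
    ultimately show "N choose k \<le> (N+1)^M" by linarith
  qed
  also have "\<dots> = (M+1) * (N+1)^M" by simp
  finally show ?thesis using eq by simp
qed

lemma poly_bound:
  assumes "(\<lambda>M. real (\<pi> M)) \<in> O(\<lambda>M. real M ^ k)"
  shows "\<exists>K>0. \<forall>M\<ge>1. real (\<pi> M) \<le> K * real M ^ k"
proof -
  obtain K where K: "K > 0" "\<forall>\<^sub>F M in sequentially. norm (real (\<pi> M)) \<le> K * norm (real M ^ k)"
    using landau_o.bigE[OF assms] by blast
  then obtain N where N: "\<And>M. M \<ge> N \<Longrightarrow> real (\<pi> M) \<le> K * real M ^ k"
    by (auto simp: eventually_sequentially)
  define K' where "K' = K + (\<Sum>M<N. real (\<pi> M))"
  have s0: "0 \<le> (\<Sum>M<N. real (\<pi> M))" by (simp add: sum_nonneg)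
  have "\<forall>M\<ge>1. real (\<pi> M) \<le> K' * real M ^ k"
  proof (intro allI impI)
    fix M :: nat assume M: "M \<ge> 1"
    have p1: "1 \<le> real M ^ k" using M by simp
    show "real (\<pi> M) \<le> K' * real M ^ k"
    proof (cases "M \<ge> N")
      case True
      then have "real (\<pi> M) \<le> K * real M ^ k" by (rule N)
      also have "\<dots> \<le> K' * real M ^ k" using s0 p1 unfolding K'_def by (intro mult_right_mono) auto
      finally show ?thesis .
    next
      case False
      then have "real (\<pi> M) \<le> (\<Sum>M<N. real (\<pi> M))" by (intro member_le_sum) auto
      also have "\<dots> \<le> K'" using K unfolding K'_def by simp
      also have "\<dots> \<le> K' * real M ^ k" using p1 K s0 unfolding K'_def by simp
      finally show ?thesis .
    qed
  qed
  moreover have "K' > 0" using K s0 unfolding K'_def by simp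
  ultimately show ?thesis by blast
qed

lemma ln_bound:
  fixes m h :: real assumes m: "m \<ge> 1" and h: "h > 0"
  shows "1 + ln m \<le> (1 + 1/h) * m powr h"
proof -
  have p: "1 \<le> m powr h" using m h by (simp add: ge_one_powr_ge_zero)
  have "h * ln m = ln (m powr h)" using m by (simp add: ln_powr)
  also have "\<dots> \<le> m powr h - 1" using m by (intro ln_le_minus_one) simp
  finally have "h * ln m \<le> m powr h" by simp
  then have "ln m \<le> m powr h / h" using h by (simp add: le_divide_eq mult.commute)
  then show ?thesis using p by (simp add: algebra_simps)
qed

lemma encoding:
  fixes \<phi> :: "nat \<Rightarrow> 'a::real_inner"
  assumes poly: "\<exists>k::nat. (\<lambda>M. real (\<pi> M)) \<in> O(\<lambda>M. real M ^ k)"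
    and orth: "is_orthonormalization \<phi> \<psi>" and c: "c > 0" and g: "\<gamma> > 0" and h: "h > 0"
  shows "\<exists>E. is_encoding \<gamma> h (Sigma_tilde \<psi> \<pi> c) E"
proof -
  obtain k where pk: "(\<lambda>M. real (\<pi> M)) \<in> O(\<lambda>M. real M ^ k)" using poly by blast
  obtain K where K: "K > 0" "\<And>M. M \<ge> 1 \<Longrightarrow> real (\<pi> M) \<le> K * real M ^ k"
    using poly_bound[OF pk] by blast
  define q :: nat where "q = nat \<lceil>\<gamma>\<rceil> + 1"
  have "real (nat \<lceil>\<gamma>\<rceil>) = of_int \<lceil>\<gamma>\<rceil>" using g by simp
  then have q: "\<gamma> + 1 \<le> real q" unfolding q_def using le_of_int_ceiling[of \<gamma>] by simp
  define n where "n M = M ^ q" for M :: nat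
  define \<delta> where "\<delta> M = 2 * c / real (n M)" for M
  define G where "G M = (\<lambda>j. -c + real j * \<delta> M) ` {..n M}" for M
  define S where "S M = {I. I \<subseteq> {1..\<pi> M} \<and> card I \<le> M}" for M
  define D where "D M = Sigma (S M) (\<lambda>I. PiE I (\<lambda>_. G M))" for M
  define F where "F = (\<lambda>(I, d). \<Sum>i\<in>I. d i *\<^sub>R \<psi> I i)"
  define E where "E M = F ` D M" for M
  define A where "A = 1 + ln (K + 1) + ln 2 + real k + real q"
  define c2 where "c2 = A * (1 + 1/h) / ln 2"
  have lnK: "ln (K + 1) > 0" using K by simp
  have ln2: "ln (2::real) > 0" by simp
  have Apos: "A > 0" unfolding A_def using lnK ln2 by linarith
  have c2pos: "c2 > 0" unfolding c2_def using Apos h ln2 by (intro divide_pos_pos mult_pos_pos) (auto intro: add_pos_pos)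
  show ?thesis unfolding is_encoding_def
  proof (rule exI[of _ E], rule exI[of _ "2*c"], rule exI[of _ c2], intro conjI allI impI)
    show "2*c > 0" using c by simp
    show "c2 > 0" by (rule c2pos)
    have "c2 > 0" unfolding c2_def using Apos h ln2 by (intro divide_pos_pos mult_pos_pos) (auto intro: add_pos_pos)
    fix M :: nat assume M: "M \<ge> 1"
    have m1: "real M \<ge> 1" using M by simp
    have realn: "real (n M) = real M ^ q" unfolding n_def by simp
    have nM: "real (n M) \<ge> 1" using m1 realn by simp
    have dpos: "\<delta> M > 0" unfolding \<delta>_def using c nM by simp
    have nd: "real (n M) * \<delta> M = 2*c" unfolding \<delta>_def using nM by simp
    have Gsub: "G M \<subseteq> {-c..c}"
    proof
      fix y assume "y \<in> G M"
      then obtain j where j: "j \<le> n M" "y = -c + real j * \<delta> M" unfolding G_def by auto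
      have "real j * \<delta> M \<le> real (n M) * \<delta> M" using j dpos by (intro mult_right_mono) auto
      moreover have "0 \<le> real j * \<delta> M" using dpos by simp
      ultimately show "y \<in> {-c..c}" using j nd by simp
    qed
    have finG: "finite (G M)" unfolding G_def by simp
    have finS: "finite (S M)" unfolding S_def
      by (rule finite_subset[of _ "Pow {1..\<pi> M}"]) auto
    have finSI: "finite I" if "I \<in> S M" for I
      using that unfolding S_def by (auto intro: finite_subset)
    have finD: "finite (D M)" unfolding D_def using finS finG finSI
      by (intro finite_SigmaI finite_PiE) auto
    show "is_covering (E M) (Sigma_tilde \<psi> \<pi> c M) (2 * c * real M powr - \<gamma>)"
      unfolding is_covering_def
    proof (intro conjI ballI)
      show "finite (E M)" unfolding E_def using finD by simp
      show "E M \<subseteq> Sigma_tilde \<psi> \<pi> c M"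
      proof
        fix x assume "x \<in> E M"
        then obtain I d where Id: "(I,d) \<in> D M" "x = F (I,d)" unfolding E_def by auto
        then have IS: "I \<in> S M" and dG: "d \<in> PiE I (\<lambda>_. G M)" unfolding D_def by auto
        have "\<forall>i\<in>I. d i \<in> {-c..c}" using dG Gsub by (auto simp: PiE_def Pi_def)
        then show "x \<in> Sigma_tilde \<psi> \<pi> c M" unfolding Sigma_tilde_def using IS Id(2)
          by (intro CollectI exI[of _ I] exI[of _ d]) (simp add: S_def F_def)
      qed
      fix a assume "a \<in> Sigma_tilde \<psi> \<pi> c M"
      then obtain I d where a: "a = (\<Sum>i\<in>I. d i *\<^sub>R \<psi> I i)" and I: "I \<subseteq> {1..\<pi> M}" "card I \<le> M"
          and dI: "\<forall>i\<in>I. d i \<in> {-c..c}"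
        unfolding Sigma_tilde_def by blast
      have finI: "finite I" using I(1) by (auto intro: finite_subset)
      have "\<forall>i\<in>I. \<exists>j\<le>n M. \<bar>d i - (-c + real j * \<delta> M)\<bar> \<le> \<delta> M"
        using round_grid[OF dpos nd] dI by auto
      then obtain J where J: "\<And>i. i \<in> I \<Longrightarrow> J i \<le> n M \<and> \<bar>d i - (-c + real (J i) * \<delta> M)\<bar> \<le> \<delta> M"
        by metis
      define d' where "d' = restrict (\<lambda>i. -c + real (J i) * \<delta> M) I"
      have "(I, d') \<in> D M" unfolding D_def S_def G_def d'_def using I J by auto
      then have xE: "F (I, d') \<in> E M" unfolding E_def by blast
      have Fd: "F (I,d') = (\<Sum>i\<in>I. (-c + real (J i) * \<delta> M) *\<^sub>R \<psi> I i)"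
        unfolding F_def d'_def by (auto intro!: sum.cong)
      have "a - F (I,d') = (\<Sum>i\<in>I. (d i - (-c + real (J i) * \<delta> M)) *\<^sub>R \<psi> I i)"
        unfolding a Fd by (simp add: sum_subtractf scaleR_diff_left)
      then have "norm (a - F (I,d')) \<le> (\<Sum>i\<in>I. norm ((d i - (-c + real (J i) * \<delta> M)) *\<^sub>R \<psi> I i))"
        by (simp only:) (rule norm_sum)
      also have "\<dots> \<le> (\<Sum>i\<in>I. \<delta> M)"
      proof (rule sum_mono)
        fix i assume i: "i \<in> I"
        have "norm (\<psi> I i) \<le> 1" using orth finI i unfolding is_orthonormalization_def by force
        then have "\<bar>d i - (-c + real (J i) * \<delta> M)\<bar> * norm (\<psi> I i) \<le> \<delta> M * 1"
          using J[OF i] by (intro mult_mono) auto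
        then show "norm ((d i - (-c + real (J i) * \<delta> M)) *\<^sub>R \<psi> I i) \<le> \<delta> M" by simp
      qed
      also have "\<dots> = real (card I) * \<delta> M" by simp
      also have "\<dots> \<le> real M * \<delta> M" using I(2) dpos by (intro mult_right_mono) auto
      also have "\<dots> = 2 * c * (real M powr 1 / real M powr real q)"
        unfolding \<delta>_def realn using m1 by (simp add: powr_realpow)
      also have "\<dots> = 2 * c * real M powr (1 - real q)" by (simp add: powr_diff)
      also have "\<dots> \<le> 2 * c * real M powr (- \<gamma>)"
        using c q m1 by (intro mult_left_mono powr_mono) auto
      finally have "dist a (F (I,d')) \<le> 2 * c * real M powr - \<gamma>" by (simp add: dist_norm)
      then show "\<exists>x\<in>E M. dist a x \<le> 2 * c * real M powr - \<gamma>" using xE by blast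
    qed
    show "log 2 (real (card (E M))) \<le> c2 * real M powr (1 + h)"
    proof -
      define m where "m = real M"
      define N where "N = \<pi> M"
      have cardG: "card (G M) \<le> n M + 1" unfolding G_def by (rule order_trans[OF card_image_le]) auto
      have "card (D M) = (\<Sum>I\<in>S M. card (PiE I (\<lambda>_. G M)))" unfolding D_def using finS finG finSI
        by (intro card_SigmaI) (auto intro: finite_PiE)
      also have "\<dots> = (\<Sum>I\<in>S M. card (G M) ^ card I)" using finSI by (intro sum.cong) (auto simp: card_PiE)
      also have "\<dots> \<le> (\<Sum>I\<in>S M. (n M + 1) ^ M)"
      proof (rule sum_mono)
        fix I assume "I \<in> S M"
        then have cI: "card I \<le> M" unfolding S_def by simp
        have "card (G M) ^ card I \<le> (n M + 1) ^ card I" using cardG by (rule power_mono) simp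
        also have "\<dots> \<le> (n M + 1)^M" using cI by (intro power_increasing) auto
        finally show "card (G M) ^ card I \<le> (n M + 1)^M" .
      qed
      also have "\<dots> = card (S M) * (n M + 1)^M" by simp
      also have "\<dots> \<le> ((M+1) * (N+1)^M) * (n M + 1)^M" unfolding S_def N_def
        using card_small_subsets by (intro mult_right_mono) auto
      finally have cD: "card (D M) \<le> (M+1) * (N+1)^M * (n M + 1)^M" .
      have cE: "card (E M) \<le> card (D M)" unfolding E_def by (rule card_image_le[OF finD])
      define B where "B = real (M+1) * real (N+1)^M * real (n M+1)^M"
      have "card (E M) \<le> (M+1) * (N+1)^M * (n M + 1)^M" using cE cD by linarith
      then have cEB: "real (card (E M)) \<le> B" unfolding B_def
        by (metis of_nat_le_iff of_nat_mult of_nat_power)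
      have Bpos: "B > 0" unfolding B_def by simp
      have lnB: "ln B = ln (m+1) + m * ln (real N + 1) + m * ln (real (n M) + 1)"
        unfolding B_def m_def by (simp add: ln_mult ln_realpow add.commute)
      have l1: "ln (m+1) \<le> m" using ln_add_one_self_le_self[of m] m1 unfolding m_def by (simp add: add.commute)
      have L0: "ln m \<ge> 0" using m1 m_def by simp
      have l2: "ln (real N + 1) \<le> ln (K + 1) + real k * ln m"
      proof -
        have mk: "1 \<le> m ^ k" using m1 m_def by simp
        have "real N + 1 \<le> K * m^k + m^k" using K(2)[OF M] mk unfolding N_def m_def by simp
        also have "\<dots> = (K+1) * m^k" by (simp add: algebra_simps)
        finally have "ln (real N + 1) \<le> ln ((K+1) * m^k)" by simp
        also have "\<dots> = ln (K+1) + real k * ln m" using K m1 by (simp add: ln_mult ln_realpow m_def)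
        finally show ?thesis .
      qed
      have l3: "ln (real (n M) + 1) \<le> ln 2 + real q * ln m"
      proof -
        have mq: "1 \<le> m ^ q" using m1 m_def by simp
        have "real (n M) + 1 \<le> 2 * m^q" using realn mq unfolding m_def by simp
        then have "ln (real (n M) + 1) \<le> ln (2 * m^q)" by simp
        also have "\<dots> = ln 2 + real q * ln m" using m1 by (simp add: ln_mult ln_realpow m_def)
        finally show ?thesis .
      qed
      have m0: "m \<ge> 0" using m1 m_def by simp
      have "ln B \<le> m + m * (ln (K + 1) + real k * ln m) + m * (ln 2 + real q * ln m)"
        unfolding lnB using l1 l2 l3 m0 by (intro add_mono mult_left_mono) auto
      also have "\<dots> = m * (1 + ln (K+1) + ln 2) + (m * ln m) * (real k + real q)" by (simp add: algebra_simps)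
      also have "\<dots> \<le> m * A + (m * ln m) * A"
        using m0 L0 lnK ln2 by (intro add_mono mult_left_mono) (auto simp: A_def)
      also have "\<dots> = A * m * (1 + ln m)" by (simp add: algebra_simps)
      also have "\<dots> \<le> A * m * ((1 + 1/h) * m powr h)"
        using ln_bound[OF _ h] Apos m1 m0 unfolding m_def by (intro mult_left_mono) auto
      also have "\<dots> = A * (1 + 1/h) * m powr (1 + h)" using m1 by (simp add: powr_add m_def algebra_simps)
      finally have lnB': "ln B \<le> A * (1 + 1/h) * m powr (1 + h)" .
      show ?thesis
      proof (cases "card (E M) = 0")
        case True then show ?thesis using c2pos by (simp add: log_def)
      next
        case False
        have "log 2 (real (card (E M))) \<le> log 2 B" using False cEB Bpos by simp
        also have "log 2 B = ln B / ln 2" by (simp add: log_def)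
        also have "\<dots> \<le> A * (1 + 1/h) * m powr (1 + h) / ln 2" using lnB' by (intro divide_right_mono) auto
        also have "\<dots> = c2 * real M powr (1 + h)" unfolding c2_def m_def by simp
        finally show ?thesis .
      qed
    qed
  qed
qed

theorem mainTheorem15:
  fixes \<phi> :: "nat \<Rightarrow> 'a::{real_inner, complete_space}"
    and \<pi> :: "nat \<Rightarrow> nat"
    and \<psi> :: "nat set \<Rightarrow> nat \<Rightarrow> 'a"
  assumes poly: "\<exists>k::nat. (\<lambda>M. real (\<pi> M)) \<in> O(\<lambda>M. real M ^ k)"
    and orth: "is_orthonormalization \<phi> \<psi>"
  shows "(\<forall>c>0. inf_encodable (Sigma_tilde \<psi> \<pi> c)) \<and>
    (\<forall>C::'a set. bounded C \<and> C \<noteq> {} \<longrightarrow>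
       approx_speed C (Sigma_pi \<phi> \<pi>) \<in> (\<lambda>c. approx_speed C (Sigma_tilde \<psi> \<pi> c)) ` {0<..} \<and>
       (\<forall>c>0. approx_speed C (Sigma_tilde \<psi> \<pi> c) \<le> approx_speed C (Sigma_pi \<phi> \<pi>)))"
proof (rule conjI)
  show "\<forall>c>0. inf_encodable (Sigma_tilde \<psi> \<pi> c)"
    unfolding inf_encodable_def gamma_encodable_def
    using encoding[OF poly orth] by blast
next
  show "\<forall>C::'a set. bounded C \<and> C \<noteq> {} \<longrightarrow>
       approx_speed C (Sigma_pi \<phi> \<pi>) \<in> (\<lambda>c. approx_speed C (Sigma_tilde \<psi> \<pi> c)) ` {0<..} \<and>
       (\<forall>c>0. approx_speed C (Sigma_tilde \<psi> \<pi> c) \<le> approx_speed C (Sigma_pi \<phi> \<pi>))"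
  proof (intro allI impI)
  fix C :: "'a set" assume C: "bounded C \<and> C \<noteq> {}"
  have ne1: "Sigma_pi \<phi> \<pi> M \<noteq> {}" for M
  proof -
    have "0 \<in> Sigma_pi \<phi> \<pi> M" unfolding Sigma_pi_def
      by (rule CollectI, rule exI[of _ "{}"], rule exI[of _ "\<lambda>_. 0"]) simp
    then show ?thesis by blast
  qed
  have ne2: "Sigma_tilde \<psi> \<pi> c M \<noteq> {}" for c M
  proof -
    have "0 \<in> Sigma_tilde \<psi> \<pi> c M" unfolding Sigma_tilde_def
      by (rule CollectI, rule exI[of _ "{}"], rule exI[of _ "\<lambda>_. 0"]) simp
    then show ?thesis by blast
  qed
  have le1: "infdist f (Sigma_pi \<phi> \<pi> M) \<le> infdist f (Sigma_tilde \<psi> \<pi> c M)" for f c M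
    by (rule infdist_mono[OF tilde_subset[OF orth] ne2])
  have B: "\<forall>c>0. approx_speed C (Sigma_tilde \<psi> \<pi> c) \<le> approx_speed C (Sigma_pi \<phi> \<pi>)"
  proof (intro allI impI)
    fix c :: real assume "c > 0"
    show "approx_speed C (Sigma_tilde \<psi> \<pi> c) \<le> approx_speed C (Sigma_pi \<phi> \<pi>)"
      unfolding approx_speed_def
    proof (rule Sup_subset_mono, rule subsetI)
      fix x assume "x \<in> {ereal \<gamma> |\<gamma>. \<exists>K. \<forall>\<^sub>F M in sequentially. \<forall>f\<in>C. infdist f (Sigma_tilde \<psi> \<pi> c M) \<le> K * real M powr - \<gamma>}"
      then obtain \<gamma> K where x: "x = ereal \<gamma>" and ev: "\<forall>\<^sub>F M in sequentially. \<forall>f\<in>C. infdist f (Sigma_tilde \<psi> \<pi> c M) \<le> K * real M powr - \<gamma>"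
        by blast
      have "\<forall>\<^sub>F M in sequentially. \<forall>f\<in>C. infdist f (Sigma_pi \<phi> \<pi> M) \<le> K * real M powr - \<gamma>"
        using ev by (rule eventually_mono) (meson le1 order_trans)
      then show "x \<in> {ereal \<gamma> |\<gamma>. \<exists>K. \<forall>\<^sub>F M in sequentially. \<forall>f\<in>C. infdist f (Sigma_pi \<phi> \<pi> M) \<le> K * real M powr - \<gamma>}"
        using x        by blast
    qed
  qed
  obtain R where R: "R > 0" "\<And>f. f \<in> C \<Longrightarrow> norm f \<le> R" using C bounded_pos by blast
  have le2: "infdist f (Sigma_tilde \<psi> \<pi> R M) \<le> infdist f (Sigma_pi \<phi> \<pi> M)" if f: "f \<in> C" for f M
  proof -
    have "infdist f (Sigma_tilde \<psi> \<pi> R M) \<le> dist f g" if g: "g \<in> Sigma_pi \<phi> \<pi> M" for g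
    proof -
      obtain I a where gI: "g = (\<Sum>i\<in>I. a i *\<^sub>R \<phi> i)" and I: "I \<subseteq> {1..\<pi> M}" "card I \<le> M"
        using g unfolding Sigma_pi_def by blast
      have fin: "finite I" using I(1) finite_subset by blast
      have gs: "g \<in> span (\<phi> ` I)" unfolding gI by (intro span_sum span_scale span_base) auto
      define p where "p = (\<Sum>i\<in>I. (f \<bullet> \<psi> I i) *\<^sub>R \<psi> I i)"
      have "\<forall>i\<in>I. f \<bullet> \<psi> I i \<in> {-R..R}"
      proof
        fix i assume i: "i \<in> I"
        have "norm (\<psi> I i) \<le> 1" using orth fin i unfolding is_orthonormalization_def by force
        then have "\<bar>f \<bullet> \<psi> I i\<bar> \<le> norm f * 1"
          by (meson Cauchy_Schwarz_ineq2 mult_left_mono norm_ge_zero order_trans)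
        then show "f \<bullet> \<psi> I i \<in> {-R..R}" using R(2)[OF f] by auto
      qed
      then have "p \<in> Sigma_tilde \<psi> \<pi> R M" unfolding Sigma_tilde_def p_def using I
        by (intro CollectI exI[of _ I] exI[of _ "\<lambda>i. f \<bullet> \<psi> I i"]) simp
      then have "infdist f (Sigma_tilde \<psi> \<pi> R M) \<le> dist f p" by (rule infdist_le)
      also have "\<dots> \<le> dist f g" unfolding p_def by (rule proj_best[OF orth fin gs])
      finally show ?thesis .
    qed
    then show ?thesis unfolding infdist_def[of f "Sigma_pi \<phi> \<pi> M"] using ne1
      by (simp add: cINF_greatest)
  qed
  have eq: "infdist f (Sigma_tilde \<psi> \<pi> R M) = infdist f (Sigma_pi \<phi> \<pi> M)" if "f \<in> C" for f M
    using le1 le2[OF that] by (meson antisym)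
  have "approx_speed C (Sigma_pi \<phi> \<pi>) = approx_speed C (Sigma_tilde \<psi> \<pi> R)"
    unfolding approx_speed_def using eq by simp
  then have "approx_speed C (Sigma_pi \<phi> \<pi>) \<in> (\<lambda>c. approx_speed C (Sigma_tilde \<psi> \<pi> c)) ` {0<..}"
    using R(1) by auto
  then show "approx_speed C (Sigma_pi \<phi> \<pi>) \<in> (\<lambda>c. approx_speed C (Sigma_tilde \<psi> \<pi> c)) ` {0<..} \<and>
       (\<forall>c>0. approx_speed C (Sigma_tilde \<psi> \<pi> c) \<le> approx_speed C (Sigma_pi \<phi> \<pi>))"
    using B by blast
  qed
qed

end
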